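(* Let $\alpha,\beta$ be positive integers and let $h$ be a real-valued function differentiable on an open neighbourhood of $\mathcal{U}_2$ in $\mathbb{C}^{2\times2}$, with $h(\Psi D)=h(\Psi)$ for all $\Psi\in\mathcal{U}_2$ and diagonal unitary $D$, such that $h(\Psi(\theta,\phi))=z_{\alpha,\beta}(\theta,\phi)^TMz_{\alpha,\beta}(\theta,\phi)+C$ for all $\theta,\phi\in\mathbb{R}$, for some real symmetric $M\in\mathbb{R}^{3\times3}$ and $C\in\mathbb{R}$. Let $\lambda_1\ge\lambda_2\ge\lambda_3$ be the eigenvalues of $M$ with orthonormal eigenvectors $w,u,v$, where $w_1\ge0$, and assume $u_1=0$ or $v_1=0$. Let $\theta_*\in[0,\pi/(2\alpha)]$ and $\phi_*\in\mathbb{R}$ satisfy $z_{\alpha,\beta}(\theta_*,\phi_* )=w$, and $\Psi_*=\Psi(\theta_*,\phi_* )$. Then $$h(\Psi_* )-h(I_2)\ge\frac{\sqrt2}{8\alpha}\,\|\operatorname{grad}h(I_2)\|\,\|\Psi_*-I_2\|.$$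
   Context: $\mathcal{U}_2$ is the group of $2\times2$ unitary matrices; $\|\cdot\|$ the Frobenius norm; $\mathbb{C}^{2\times2}$ carries the real inner product $\mathrm{Re}\,\mathrm{tr}(X^HY)$; $\nabla h=\partial h/\partial X^{\Re}+\mathrm{i}\,\partial h/\partial X^{\Im}$ and $\operatorname{grad}h(U)=U\,\mathrm{skew}(U^H\nabla h(U))$ with $\mathrm{skew}(P)=\frac12(P-P^H)$. $\Psi(\theta,\phi)=\begin{bmatrix}\cos\theta&-\sin\theta e^{\mathrm{i}\phi}\\ \sin\theta e^{-\mathrm{i}\phi}&\cos\theta\end{bmatrix}$ and $z_{\alpha,\beta}(\theta,\phi)=(\cos\alpha\theta,-\sin\alpha\theta\cos\beta\phi,-\sin\alpha\theta\sin\beta\phi)^T$. *)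

theory Defs
  imports "HOL-Analysis.Analysis"
begin

type_synonym cmat2 = "complex^2^2"

definition mH :: "cmat2 \<Rightarrow> cmat2" where
  "mH X = (\<chi> i j. cnj (X $ j $ i))"

definition unitary2 :: "cmat2 \<Rightarrow> bool" where
  "unitary2 U \<longleftrightarrow> mH U ** U = mat 1"

definition U2 :: "cmat2 set" where
  "U2 = {U. unitary2 U}"

definition diag_unitary2 :: "cmat2 \<Rightarrow> bool" where
  "diag_unitary2 D \<longleftrightarrow> unitary2 D \<and> (\<forall>i j. i \<noteq> j \<longrightarrow> D $ i $ j = 0)"

definition Eunit :: "2 \<Rightarrow> 2 \<Rightarrow> complex \<Rightarrow> cmat2" where
  "Eunit i j c = (\<chi> k l. if k = i \<and> l = j then c else 0)"

definition egrad :: "(cmat2 \<Rightarrow> real) \<Rightarrow> cmat2 \<Rightarrow> cmat2" where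
  "egrad h X = (\<chi> i j. Complex (deriv (\<lambda>t. h (X + t *\<^sub>R Eunit i j 1)) 0)
                              (deriv (\<lambda>t. h (X + t *\<^sub>R Eunit i j \<i>)) 0))"

definition skew :: "cmat2 \<Rightarrow> cmat2" where
  "skew P = (1/2::real) *\<^sub>R (P - mH P)"

definition rgrad :: "(cmat2 \<Rightarrow> real) \<Rightarrow> cmat2 \<Rightarrow> cmat2" where
  "rgrad h U = U ** skew (mH U ** egrad h U)"

definition Psi :: "real \<Rightarrow> real \<Rightarrow> cmat2" where
  "Psi \<theta> \<phi> = vector [vector [complex_of_real (cos \<theta>), - complex_of_real (sin \<theta>) * cis \<phi>],
                       vector [complex_of_real (sin \<theta>) * cis (- \<phi>), complex_of_real (cos \<theta>)]]"

definition zab :: "nat \<Rightarrow> nat \<Rightarrow> real \<Rightarrow> real \<Rightarrow> real^3" where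
  "zab \<alpha> \<beta> \<theta> \<phi> = vector [cos (real \<alpha> * \<theta>), - sin (real \<alpha> * \<theta>) * cos (real \<beta> * \<phi>),
                             - sin (real \<alpha> * \<theta>) * sin (real \<beta> * \<phi>)]"

end

theory Submission
  imports Defs
begin


lemma cmat2_eq: "(A::cmat2) = B \<longleftrightarrow> A$1$1 = B$1$1 \<and> A$1$2 = B$1$2 \<and> A$2$1 = B$2$1 \<and> A$2$2 = B$2$2"
  by (auto simp: vec_eq_iff forall_2)

lemma norm_cmat2_sq: "(norm (A::cmat2))^2 = (cmod (A$1$1))^2 + (cmod (A$1$2))^2 + (cmod (A$2$1))^2 + (cmod (A$2$2))^2"
  by (simp add: norm_vec_def L2_set_def sum_2)

lemma Psi_entries: "Psi t p $1$1 = of_real (cos t)" "Psi t p $1$2 = - of_real (sin t) * cis p"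
   "Psi t p $2$1 = of_real (sin t) * cis (-p)" "Psi t p $2$2 = of_real (cos t)"
  by (simp_all add: Psi_def)

lemma Eunit_entries: "Eunit i j c $ k $ l = (if k = i \<and> l = j then c else 0)"
  by (simp add: Eunit_def)

lemma mat1_entries: "(mat 1 :: cmat2)$1$1 = 1" "(mat 1 :: cmat2)$1$2 = 0" "(mat 1 :: cmat2)$2$1 = 0" "(mat 1 :: cmat2)$2$2 = 1"
  by (simp_all add: mat_def)

lemma Psi_00: "Psi 0 0 = mat 1"
  by (simp add: cmat2_eq Psi_entries mat1_entries)



lemma Psi_dec0: "Psi t 0 = cos t *\<^sub>R mat 1 + sin t *\<^sub>R (Eunit 2 1 1 - Eunit 1 2 1)"
  unfolding cmat2_eq Psi_entries 
  apply (simp only: vector_add_component vector_scaleR_component vector_minus_component mat1_entries Eunit_entries)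
  apply (simp add: scaleR_conv_of_real)
  done
lemma Psi_dec1: "Psi t (pi/2) = cos t *\<^sub>R mat 1 + sin t *\<^sub>R (- Eunit 1 2 \<i> - Eunit 2 1 \<i>)"
  unfolding cmat2_eq Psi_entries 
  apply (simp only: vector_add_component vector_scaleR_component vector_minus_component vector_uminus_component mat1_entries Eunit_entries)
  apply (simp add: scaleR_conv_of_real)
  done

lemma norm_Psi_sub: "(norm (Psi t p - mat 1))^2 = 4 - 4 * cos t"
proof -
  have e1: "cmod (complex_of_real (cos t) - 1) = \<bar>cos t - 1\<bar>"
    by (metis norm_of_real of_real_1 of_real_diff)
  have e2: "cmod (- complex_of_real (sin t) * cis p) = \<bar>sin t\<bar>"
    by (simp only: norm_mult norm_minus_cancel norm_of_real norm_cis mult_1_right)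
  have e3: "cmod (complex_of_real (sin t) * cis (-p)) = \<bar>sin t\<bar>"
    by (simp only: norm_mult norm_of_real norm_cis mult_1_right)
  have "(norm (Psi t p - mat 1))^2 = (cos t - 1)^2 + (sin t)^2 + (sin t)^2 + (cos t - 1)^2"
    unfolding norm_cmat2_sq 
    by (simp only: vector_minus_component Psi_entries mat1_entries e1 e2 e3 diff_zero power2_abs)
  also have "\<dots> = 4 - 4 * cos t" using sin_cos_squared_add[of t] by (simp add: power2_eq_square algebra_simps)
  finally show ?thesis .
qed

lemma mH_mat1: "mH (mat 1) = mat 1"
  unfolding cmat2_eq mH_def by (simp add: mat1_entries)

lemma unitary_mat1: "mat 1 \<in> U2"
  by (simp add: U2_def unitary2_def mH_mat1)

definition Dg :: "real \<Rightarrow> 2 \<Rightarrow> cmat2" where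
  "Dg t k = (\<chi> i j. if i = j then (if i = k then cis t else 1) else 0)"

lemma Dg_unit: "diag_unitary2 (Dg t k)"
  unfolding diag_unitary2_def unitary2_def
proof
  show "mH (Dg t k) ** Dg t k = mat 1"
    unfolding cmat2_eq mH_def Dg_def matrix_matrix_mult_def
    using exhaust_2[of k] by (elim disjE) (simp_all add: sum_2 mat1_entries cis_cnj cis_mult)
  show "\<forall>i j. i \<noteq> j \<longrightarrow> Dg t k $ i $ j = 0" by (simp add: Dg_def)
qed

lemma Dg_dec: "Dg t k = mat 1 + (cos t - 1) *\<^sub>R Eunit k k 1 + sin t *\<^sub>R Eunit k k \<i>"
  unfolding cmat2_eq Dg_def
  apply (simp only: vector_add_component vector_scaleR_component mat1_entries Eunit_entries vec_lambda_beta)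
  using exhaust_2[of k] by (elim disjE) (simp_all add: scaleR_conv_of_real cis.ctr Complex_eq)



lemma curve_deriv:
  fixes h :: "'a::real_normed_vector \<Rightarrow> real"
  assumes hd: "(h has_derivative Dh) (at X)" and g: "(g has_vector_derivative V) (at 0)" and g0: "g 0 = X"
  shows "((\<lambda>t. h (g t)) has_real_derivative Dh V) (at 0)"
proof -
  have g': "(g has_derivative (\<lambda>s. s *\<^sub>R V)) (at 0)" using g by (simp add: has_vector_derivative_def)
  have "((\<lambda>t. h (g t)) has_derivative (\<lambda>s. Dh (s *\<^sub>R V))) (at 0)"
    using has_derivative_compose[OF g'] hd g0 by simp
  moreover have "(\<lambda>s. Dh (s *\<^sub>R V)) = (\<lambda>s. Dh V * s)"
    using linear.scaleR[OF has_derivative_linear[OF hd]] by (auto simp: mult.commute)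
  ultimately show ?thesis by (simp add: has_field_derivative_def)
qed

lemma deriv_dir:
  fixes h :: "'a::real_normed_vector \<Rightarrow> real"
  assumes hd: "(h has_derivative Dh) (at X)"
  shows "deriv (\<lambda>t. h (X + t *\<^sub>R E)) 0 = Dh E"
proof -
  have "((\<lambda>t. X + t *\<^sub>R E) has_vector_derivative E) (at 0)"
    by (auto intro!: derivative_eq_intros)
  from curve_deriv[OF hd this] show ?thesis by (intro DERIV_imp_deriv) simp
qed

lemma trig_curve: "((\<lambda>t. cos t *\<^sub>R (A::'a::real_normed_vector) + sin t *\<^sub>R Q) has_vector_derivative Q) (at 0)"
proof -
  have "((\<lambda>t. cos t *\<^sub>R A + sin t *\<^sub>R Q) has_vector_derivative (- sin 0 *\<^sub>R A + cos 0 *\<^sub>R Q)) (at 0)"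
    by (auto intro!: derivative_eq_intros)
  then show ?thesis by simp
qed

lemma Dg_curve: "((\<lambda>t. Dg t k) has_vector_derivative Eunit k k \<i>) (at 0)"
proof -
  have "((\<lambda>t. mat 1 + (cos t - 1) *\<^sub>R Eunit k k 1 + sin t *\<^sub>R Eunit k k \<i>) has_vector_derivative
     (- sin 0 *\<^sub>R Eunit k k 1 + cos 0 *\<^sub>R Eunit k k \<i>)) (at 0)"
    by (auto intro!: derivative_eq_intros)
  then show ?thesis by (simp add: Dg_dec)
qed

definition e1v :: "real^3" where "e1v = vector [1,0,0]"
definition yv :: "nat \<Rightarrow> real \<Rightarrow> real^3" where "yv \<beta> p = vector [0, - cos (real \<beta> * p), - sin (real \<beta> * p)]"

lemma zab_dec: "zab a b t p = cos (real a * t) *\<^sub>R e1v + sin (real a * t) *\<^sub>R yv b p"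
  unfolding zab_def e1v_def yv_def by (simp add: vec_eq_iff forall_3)

lemma quad_dec:
  fixes M :: "real^3^3"
  shows "(c *\<^sub>R a + s *\<^sub>R b) \<bullet> (M *v (c *\<^sub>R a + s *\<^sub>R b)) =
     c^2 * (a \<bullet> (M *v a)) + c * s * (a \<bullet> (M *v b) + b \<bullet> (M *v a)) + s^2 * (b \<bullet> (M *v b))"
  by (simp add: matrix_vector_right_distrib matrix_vector_mult_scaleR inner_add_left inner_add_right power2_eq_square algebra_simps)

lemma quad_deriv:
  fixes M :: "real^3^3"
  shows "((\<lambda>t. zab a b t p \<bullet> (M *v zab a b t p) + C) has_real_derivative
     real a * (e1v \<bullet> (M *v yv b p) + yv b p \<bullet> (M *v e1v))) (at 0)"
proof -
  let ?A = "e1v \<bullet> (M *v e1v)" and ?B = "e1v \<bullet> (M *v yv b p) + yv b p \<bullet> (M *v e1v)" and ?Q = "yv b p \<bullet> (M *v yv b p)"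
  have eq: "(\<lambda>t. zab a b t p \<bullet> (M *v zab a b t p) + C) = (\<lambda>t. (cos (real a * t))^2 * ?A + cos (real a * t) * sin (real a * t) * ?B + (sin (real a * t))^2 * ?Q + C)"
    by (simp add: zab_dec quad_dec)
  have "((\<lambda>t. (cos (real a * t))^2 * ?A + cos (real a * t) * sin (real a * t) * ?B + (sin (real a * t))^2 * ?Q + C) has_real_derivative
     (2 * cos (real a * 0) * (- sin (real a * 0) * real a) * ?A + ((- sin (real a * 0) * real a) * sin (real a * 0) + cos (real a * 0) * (cos (real a * 0) * real a)) * ?B
      + 2 * sin (real a * 0) * (cos (real a * 0) * real a) * ?Q)) (at 0)"
    by (auto intro!: derivative_eq_intros)
  then show ?thesis unfolding eq by simp
qed




lemma complete1:
  fixes w u v :: "real^3"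
  assumes "norm w = 1" and "norm u = 1" and "norm v = 1"
    and "w \<bullet> u = 0" and "w \<bullet> v = 0" and "u \<bullet> v = 0"
  shows "w$1 * w$j + u$1 * u$j + v$1 * v$j = (if j = 1 then 1 else 0)"
proof -
  define Q :: "real^3^3" where "Q = vector [w,u,v]"
  have n: "w \<bullet> w = 1" "u \<bullet> u = 1" "v \<bullet> v = 1" using assms(1-3) by (simp_all add: power2_norm_eq_inner[symmetric])
  have o: "u \<bullet> w = 0" "v \<bullet> w = 0" "v \<bullet> u = 0" using assms(4-6) by (simp_all add: inner_commute)
  have "Q ** transpose Q = mat 1"
  proof -
    have "(Q ** transpose Q) $ i $ k = Q$i \<bullet> Q$k" for i k
      by (simp add: matrix_matrix_mult_def transpose_def inner_vec_def)
    moreover have "Q$i \<bullet> Q$k = mat 1 $ i $ k" for i k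
      using exhaust_3[of i] exhaust_3[of k] n o assms(4-6) by (auto simp: Q_def mat_def)
    ultimately show ?thesis by (simp add: vec_eq_iff)
  qed
  then have "transpose Q ** Q = mat 1" using matrix_left_right_inverse by blast
  then have "(transpose Q ** Q) $ 1 $ j = mat 1 $ 1 $ j" by simp
  then show ?thesis by (simp add: matrix_matrix_mult_def transpose_def sum_3 Q_def mat_def)
qed




lemma cm_half: "(cmod ((1/2::real) *\<^sub>R (a - cnj b)))^2 = ((Re a - Re b)^2 + (Im a + Im b)^2)/4"
  unfolding cmod_power2 by (simp add: power2_eq_square field_simps)

lemma norm_skew_sq: "(norm (skew G))^2 = (Im (G$1$1))^2 + (Im (G$2$2))^2
   + ((Re(G$1$2) - Re(G$2$1))^2 + (Im(G$1$2)+Im(G$2$1))^2)/2"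
  unfolding norm_cmat2_sq skew_def mH_def
  apply (simp only: vector_scaleR_component vector_minus_component vec_lambda_beta cm_half)
  by (simp add: power2_eq_square field_simps)

lemma KB_eq:
  fixes M :: "real^3^3"
  assumes "transpose M = M"
  shows "e1v \<bullet> (M *v yv b p) + yv b p \<bullet> (M *v e1v) = - 2 * (cos (real b * p) * (M *v e1v)$2 + sin (real b * p) * (M *v e1v)$3)"
proof -
  have "e1v \<bullet> (M *v yv b p) = (e1v v* M) \<bullet> yv b p" by (simp add: dot_lmul_matrix)
  also have "e1v v* M = M *v e1v" by (metis assms vector_transpose_matrix)
  finally have 1: "e1v \<bullet> (M *v yv b p) = (M *v e1v) \<bullet> yv b p" .
  have 2: "(M *v e1v) \<bullet> yv b p = - (cos (real b * p) * (M *v e1v)$2 + sin (real b * p) * (M *v e1v)$3)"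
    by (simp add: inner_vec_def sum_3 yv_def)
  show ?thesis using 1 2 by (simp add: inner_commute)
qed

lemma final_ineq:
  fixes d p q x r2 :: real
  assumes "0 \<le> x" "x \<le> 1" "0 \<le> d" "q = 1 - x^2" "r2 = x^2 * q * d^2"
  shows "r2 * (1 - x) / 2 \<le> (d * q)^2"
proof -
  have q: "q = (1 - x) * (1 + x)" using assms(4) by (simp add: power2_eq_square algebra_simps)
  have "x^2 * (1 - x) / 2 \<le> q"
  proof -
    have "x^2 \<le> 1" using assms(1,2) by (simp add: power_le_one)
    then have "x^2 / 2 \<le> 1 + x" using assms(1) by simp
    then show ?thesis unfolding q using assms(2) by (metis mult.commute mult_left_mono diff_ge_0_iff_ge times_divide_eq_right)
  qed
  then have "(d^2 * q) * (x^2 * (1 - x) / 2) \<le> (d^2 * q) * q"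
    using assms(1,2) q by (intro mult_left_mono) auto
  then show ?thesis using assms(5) by (simp add: power2_eq_square algebra_simps)
qed




lemma spectral:
  fixes M :: "real^3^3" and w u v :: "real^3"
  assumes "lam1 \<ge> lam2" and "lam2 \<ge> lam3"
    and mw: "M *v w = lam1 *\<^sub>R w" and mu: "M *v u = lam2 *\<^sub>R u" and mv: "M *v v = lam3 *\<^sub>R v"
    and "norm w = 1" and "norm u = 1" and "norm v = 1"
    and o: "w \<bullet> u = 0" "w \<bullet> v = 0" "u \<bullet> v = 0"
    and "u $ 1 = 0 \<or> v $ 1 = 0"
  shows "\<exists>l q. l \<le> lam1 \<and> q = 1 - (w$1)^2 \<and> (M *v e1v)$1 = lam1 * (w$1)^2 + l * q \<and> (M *v e1v) \<bullet> (M *v e1v) = lam1^2 * (w$1)^2 + l^2 * q"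
proof -
  define m where "m = M *v e1v"
  have ww: "w \<bullet> w = 1" using assms(6) by (simp add: power2_norm_eq_inner[symmetric])
  have uu: "u \<bullet> u = 1" using assms(7) by (simp add: power2_norm_eq_inner[symmetric])
  have vv: "v \<bullet> v = 1" using assms(8) by (simp add: power2_norm_eq_inner[symmetric])
  have cpl: "w$1 * w$j + u$1 * u$j + v$1 * v$j = (if j = 1 then 1 else 0)" for j
    using complete1[OF assms(6-11)] .
  have e1exp: "e1v = w$1 *\<^sub>R w + u$1 *\<^sub>R u + v$1 *\<^sub>R v"
    unfolding vec_eq_iff forall_3 using cpl[of 1] cpl[of 2] cpl[of 3] by (simp add: e1v_def mult.commute)
  have mexp: "m = (w$1 * lam1) *\<^sub>R w + (u$1 * lam2) *\<^sub>R u + (v$1 * lam3) *\<^sub>R v"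
    unfolding m_def e1exp by (simp only: matrix_vector_right_distrib matrix_vector_mult_scaleR mw mu mv scaleR_scaleR mult.commute)
  have sq1: "(w$1)^2 + (u$1)^2 + (v$1)^2 = 1" using cpl[of 1] by (simp add: power2_eq_square)
  have m1: "m$1 = lam1 * (w$1)^2 + lam2 * (u$1)^2 + lam3 * (v$1)^2"
    unfolding mexp by (simp add: power2_eq_square)
  have mm: "m \<bullet> m = lam1^2 * (w$1)^2 + lam2^2 * (u$1)^2 + lam3^2 * (v$1)^2"
  proof -
    have ou: "u \<bullet> w = 0" "v \<bullet> w = 0" "v \<bullet> u = 0" using o by (simp_all add: inner_commute)
    show ?thesis unfolding mexp 
      by (simp only: inner_add_left inner_add_right inner_scaleR_left inner_scaleR_right ww uu vv o ou mult_zero_right mult_1_right add_0_right add_0_left)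
        (simp add: power2_eq_square)
  qed
  show ?thesis
  proof (cases "v$1 = 0")
    case True
    then show ?thesis using assms(1) sq1 m1 mm unfolding m_def
      by (intro exI[of _ lam2] exI[of _ "(u$1)^2"]) auto
  next
    case False
    then have "u$1 = 0" using assms(12) by simp
    then show ?thesis using assms(1,2) sq1 m1 mm unfolding m_def
      by (intro exI[of _ lam3] exI[of _ "(v$1)^2"]) auto
  qed
qed



lemma aux_lin: "(X::real) \<le> a + b \<Longrightarrow> 0 \<le> b \<Longrightarrow> a + X \<le> 2 * (a + b)" by (simp add: algebra_simps)

theorem lemma4p9:
  fixes \<alpha> \<beta> :: nat and h :: "cmat2 \<Rightarrow> real" and M :: "real^3^3" and C :: real
    and lam1 lam2 lam3 :: real and w u v :: "real^3" and \<theta>s \<phi>s :: real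
  assumes "\<alpha> > 0" and "\<beta> > 0"
    and "\<exists>S. open S \<and> U2 \<subseteq> S \<and> (\<forall>X\<in>S. h differentiable (at X))"
    and "\<And>P D. P \<in> U2 \<Longrightarrow> diag_unitary2 D \<Longrightarrow> h (P ** D) = h P"
    and "\<And>\<theta> \<phi>. h (Psi \<theta> \<phi>) = zab \<alpha> \<beta> \<theta> \<phi> \<bullet> (M *v zab \<alpha> \<beta> \<theta> \<phi>) + C"
    and "transpose M = M"
    and "lam1 \<ge> lam2" and "lam2 \<ge> lam3"
    and "M *v w = lam1 *\<^sub>R w" and "M *v u = lam2 *\<^sub>R u" and "M *v v = lam3 *\<^sub>R v"
    and "norm w = 1" and "norm u = 1" and "norm v = 1"
    and "w \<bullet> u = 0" and "w \<bullet> v = 0" and "u \<bullet> v = 0"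
    and "w $ 1 \<ge> 0"
    and "u $ 1 = 0 \<or> v $ 1 = 0"
    and "0 \<le> \<theta>s" and "\<theta>s \<le> pi / (2 * real \<alpha>)"
    and "zab \<alpha> \<beta> \<theta>s \<phi>s = w"
  shows "h (Psi \<theta>s \<phi>s) - h (mat 1)
           \<ge> sqrt 2 / (8 * real \<alpha>) * norm (rgrad h (mat 1)) * norm (Psi \<theta>s \<phi>s - mat 1)"
proof -
  note hz = assms(5)
  obtain S where S: "open S" "U2 \<subseteq> S" "\<forall>X\<in>S. h differentiable (at X)" using assms(3) by blast
  have "h differentiable (at (mat 1))" using S unitary_mat1 by blast
  then obtain Dh where hd: "(h has_derivative Dh) (at (mat 1))" unfolding differentiable_def by blast
  have lin: "linear Dh" using has_derivative_linear[OF hd] .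
  define G where "G = egrad h (mat 1)"
  have Gij: "G $ i $ j = Complex (Dh (Eunit i j 1)) (Dh (Eunit i j \<i>))" for i j
    unfolding G_def egrad_def by (simp add: deriv_dir[OF hd])
  have rg: "rgrad h (mat 1) = skew G" unfolding rgrad_def G_def by (simp add: mH_mat1)
  have F1: "Dh (Eunit k k \<i>) = 0" for k
  proof -
    have "Dg 0 k = mat 1" by (simp add: Dg_dec)
    from curve_deriv[OF hd Dg_curve this]
    have d1: "((\<lambda>t. h (Dg t k)) has_real_derivative Dh (Eunit k k \<i>)) (at 0)" .
    have "(\<lambda>t. h (Dg t k)) = (\<lambda>t. h (mat 1))"
      using assms(4)[OF unitary_mat1 Dg_unit] by simp
    then have "((\<lambda>t. h (Dg t k)) has_real_derivative 0) (at 0)" by simp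
    with d1 show ?thesis using DERIV_unique by blast
  qed
  define m where "m = M *v e1v"
  have hf: "(\<lambda>t. h (Psi t p)) = (\<lambda>t. zab \<alpha> \<beta> t p \<bullet> (M *v zab \<alpha> \<beta> t p) + C)" for p
    using hz by simp
  have qd: "((\<lambda>t. h (Psi t p)) has_real_derivative
      real \<alpha> * (- 2 * (cos (real \<beta> * p) * m$2 + sin (real \<beta> * p) * m$3))) (at 0)" for p
    unfolding hf using quad_deriv[of \<alpha> \<beta> p M C] KB_eq[OF assms(6)] m_def by simp
  have F2: "Dh (Eunit 2 1 1) - Dh (Eunit 1 2 1) = - 2 * real \<alpha> * m$2"
  proof -
    have "((\<lambda>t. h (Psi t 0)) has_real_derivative Dh (Eunit 2 1 1 - Eunit 1 2 1)) (at 0)"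
      unfolding Psi_dec0 by (rule curve_deriv[OF hd trig_curve]) simp
    with qd[of 0] have "Dh (Eunit 2 1 1 - Eunit 1 2 1) = real \<alpha> * (- 2 * (cos (real \<beta> * 0) * m$2 + sin (real \<beta> * 0) * m$3))"
      using DERIV_unique by blast
    then show ?thesis using linear_diff[OF lin] by simp
  qed
  define cb sb where "cb = cos (real \<beta> * (pi/2))" and "sb = sin (real \<beta> * (pi/2))"
  have F3: "Dh (Eunit 1 2 \<i>) + Dh (Eunit 2 1 \<i>) = 2 * real \<alpha> * (cb * m$2 + sb * m$3)"
  proof -
    have "((\<lambda>t. h (Psi t (pi/2))) has_real_derivative Dh (- Eunit 1 2 \<i> - Eunit 2 1 \<i>)) (at 0)"
      unfolding Psi_dec1 by (rule curve_deriv[OF hd trig_curve]) simp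
    with qd[of "pi/2"] have "Dh (- Eunit 1 2 \<i> - Eunit 2 1 \<i>) = real \<alpha> * (- 2 * (cb * m$2 + sb * m$3))"
      unfolding cb_def sb_def using DERIV_unique by blast
    then show ?thesis using linear_diff[OF lin] linear_neg[OF lin] by (simp add: algebra_simps)
  qed
  define r where "r = sqrt ((m$2)^2 + (m$3)^2)"
  have ns: "(norm (rgrad h (mat 1)))^2 \<le> (2 * real \<alpha> * r)^2"
  proof -
    have cs: "cb^2 + sb^2 = 1" unfolding cb_def sb_def by simp
    have cauchy: "(cb * m$2 + sb * m$3)^2 \<le> (m$2)^2 + (m$3)^2"
    proof -
      have "(cb * m$2 + sb * m$3)^2 + (sb * m$2 - cb * m$3)^2 = (cb^2 + sb^2) * ((m$2)^2 + (m$3)^2)"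
        by (simp add: power2_eq_square algebra_simps)
      then have "(cb * m$2 + sb * m$3)^2 + (sb * m$2 - cb * m$3)^2 = (m$2)^2 + (m$3)^2"
        unfolding cs by simp
      moreover have "0 \<le> (sb * m$2 - cb * m$3)^2" by simp
      ultimately show ?thesis by linarith
    qed
    have A: "Dh (Eunit 1 2 1) - Dh (Eunit 2 1 1) = 2 * real \<alpha> * m$2" using F2 by linarith
    have n1: "(norm (rgrad h (mat 1)))^2 = ((Dh (Eunit 1 2 1) - Dh (Eunit 2 1 1))^2 + (Dh (Eunit 1 2 \<i>) + Dh (Eunit 2 1 \<i>))^2) / 2"
      unfolding rg norm_skew_sq Gij complex.sel F1 by simp
    have "(norm (rgrad h (mat 1)))^2 = ((2 * real \<alpha> * m$2)^2 + (2 * real \<alpha> * (cb * m$2 + sb * m$3))^2) / 2"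
      unfolding n1 A F3 ..
    also have "\<dots> = 2 * (real \<alpha>)^2 * ((m$2)^2 + (cb * m$2 + sb * m$3)^2)"
      by (simp add: power2_eq_square algebra_simps)
    also have "\<dots> \<le> 2 * (real \<alpha>)^2 * (2 * ((m$2)^2 + (m$3)^2))"
    proof (rule mult_left_mono)
      show "(m$2)^2 + (cb * m$2 + sb * m$3)^2 \<le> 2 * ((m$2)^2 + (m$3)^2)"
        using aux_lin[OF cauchy zero_le_power2[of "m$3"]] .
    qed simp
    also have "\<dots> = (2 * real \<alpha> * r)^2"
      unfolding r_def by (simp add: power2_eq_square algebra_simps)
    finally show ?thesis .
  qed
  have rpos: "0 \<le> r" unfolding r_def by simp
  have nsle: "norm (rgrad h (mat 1)) \<le> 2 * real \<alpha> * r"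
    by (rule power2_le_imp_le[OF ns]) (use rpos in simp)
  have z0: "zab \<alpha> \<beta> 0 0 = e1v" by (simp add: zab_dec)
  have hI: "h (mat 1) = m$1 + C"
    using hz[of 0 0] unfolding Psi_00 z0 m_def by (simp add: inner_vec_def sum_3 e1v_def)
  have ww: "w \<bullet> w = 1" using assms(12) by (simp add: power2_norm_eq_inner[symmetric])
  have hP: "h (Psi \<theta>s \<phi>s) = lam1 + C"
    using hz[of \<theta>s \<phi>s] unfolding assms(22) assms(9) by (simp add: ww)
  define x where "x = w$1"
  have x0: "0 \<le> x" using assms(18) x_def by simp
  have xcos: "x = cos (real \<alpha> * \<theta>s)" using assms(22) unfolding x_def by (auto simp: zab_def)
  have ccos: "cos (real \<alpha> * \<theta>s) \<le> cos \<theta>s"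
  proof -
    have a1: "1 \<le> real \<alpha>" using assms(1) by simp
    have "\<theta>s \<le> real \<alpha> * \<theta>s" using a1 assms(20) by (simp add: mult_le_cancel_right1)
    moreover have "real \<alpha> * \<theta>s \<le> pi/2" using assms(21) assms(1) by (simp add: field_simps)
    ultimately show ?thesis using assms(20) by (intro cos_monotone_0_pi_le) auto
  qed
  define N where "N = norm (Psi \<theta>s \<phi>s - mat 1)"
  have N2: "N^2 \<le> 4 - 4 * x" unfolding N_def norm_Psi_sub using ccos xcos by simp
  have N0: "0 \<le> N" unfolding N_def by simp
  have sq1: "(w$1)^2 + (u$1)^2 + (v$1)^2 = 1" using complete1[OF assms(12-17), of 1] by (simp add: power2_eq_square)
  have mm3: "m \<bullet> m = (m$1)^2 + (m$2)^2 + (m$3)^2" by (simp add: inner_vec_def sum_3 power2_eq_square)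
  have "\<exists>l q. l \<le> lam1 \<and> q = 1 - x^2 \<and> m$1 = lam1 * x^2 + l * q \<and> m \<bullet> m = lam1^2 * x^2 + l^2 * q"
    unfolding m_def x_def by (rule spectral[OF assms(7-17) assms(19)])
  then obtain l q where lq: "l \<le> lam1" "q = 1 - x^2" "m$1 = lam1 * x^2 + l * q" "m \<bullet> m = lam1^2 * x^2 + l^2 * q"
    by blast
  have x1: "x \<le> 1"
  proof -
    have "x^2 \<le> 1" using sq1 zero_le_power2[of "u$1"] zero_le_power2[of "v$1"] unfolding x_def by linarith
    then show ?thesis using x0 by (simp add: power_le_one_iff abs_square_le_1)
  qed
  have p1: "x^2 + q = 1" using lq(2) by simp
  have gap: "lam1 - m$1 = (lam1 - l) * q"
    unfolding lq(3) lq(2) by (simp add: algebra_simps)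
  have r2: "r^2 = x^2 * q * (lam1 - l)^2"
  proof -
    have "r^2 = m \<bullet> m - (m$1)^2" unfolding r_def mm3 by simp
    also have "\<dots> = lam1^2 * x^2 + l^2 * q - (lam1 * x^2 + l * q)^2" using lq by simp
    also have "\<dots> = x^2 * q * (lam1 - l)^2"
      unfolding lq(2) by (simp add: power2_eq_square algebra_simps)
    finally show ?thesis .
  qed
  have key: "r^2 * (1 - x) / 2 \<le> ((lam1 - l) * q)^2"
    by (rule final_ineq[OF x0 x1 _ lq(2) r2]) (use lq(1) in simp)
  have qpos: "0 \<le> (lam1 - l) * q" using lq(1,2) x0 x1 by (simp add: power_le_one)
  have "sqrt 2 / (8 * real \<alpha>) * norm (rgrad h (mat 1)) * N \<le> sqrt 2 / (8 * real \<alpha>) * (2 * real \<alpha> * r) * N"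
    using nsle N0 assms(1) by (intro mult_right_mono mult_left_mono) auto
  also have "\<dots> = sqrt 2 / 4 * r * N" using assms(1) by (simp add: field_simps)
  also have "\<dots> \<le> (lam1 - l) * q"
  proof (rule power2_le_imp_le[OF _ qpos])
    have "(sqrt 2 / 4 * r * N)^2 = r^2 * N^2 / 8" by (simp add: power_mult_distrib power_divide)
    also have "\<dots> \<le> r^2 * (4 - 4 * x) / 8" using N2 by (intro divide_right_mono mult_left_mono) auto
    also have "\<dots> = r^2 * (1 - x) / 2" by (simp add: field_simps)
    finally show "(sqrt 2 / 4 * r * N)^2 \<le> ((lam1 - l) * q)^2" using key by linarith
  qed
  finally show ?thesis unfolding hP hI N_def gap[symmetric] by simp
qed

end
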